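(* Let $G_H$ be a finite undirected multigraph (parallel edges allowed, no self-loops) with vertex set $V$ and edge set partitioned as $E = S \sqcup S^c$ into secure edges $S$ and insecure edges $S^c$. (1) If $S^c \neq \emptyset$ (even if $|S^c| = 1$), then $G_H$ admits both a hidden generalized attack and a detectable generalized attack. (2) If $G_H$ admits a hidden (respectively detectable) generalized attack and $G'$ is obtained from $G_H$ by adding new secure edges between vertices of $V$, then $G'$ also admits a hidden (respectively detectable) generalized attack.
   Context: For a nonempty proper subset $U \subsetneq V$, the cut $\delta(U)$ is the set of edges with exactly one endpoint in $U$; a cut is any set of this form. A generalized attack is a triple $(C,J,I)$ where $C$ is a cut, $J \subseteq C$ is a set of jammed edges (secure or insecure), and $I \subseteq (C \cap S^c)\setminus J$ is a nonempty set of insecure edges into which data is injected. The attack is hidden if $I \cup J = C$, and detectable if $2|I| > |C\setminus J|$. *)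

theory Defs
  imports Main
begin

text \<open>A finite multigraph: vertex set V, edge set E (edges are abstract names, so
parallel edges are allowed), and ends e = the set of the two distinct endpoints of e
(no self-loops).\<close>
definition multigraph :: "'v set \<Rightarrow> 'e set \<Rightarrow> ('e \<Rightarrow> 'v set) \<Rightarrow> bool" where
  "multigraph V E ends \<longleftrightarrow> finite V \<and> finite E \<and>
     (\<forall>e\<in>E. ends e \<subseteq> V \<and> card (ends e) = 2)"

definition cut_of :: "'e set \<Rightarrow> ('e \<Rightarrow> 'v set) \<Rightarrow> 'v set \<Rightarrow> 'e set" where
  "cut_of E ends U = {e \<in> E. card (ends e \<inter> U) = 1}"

definition is_cut :: "'v set \<Rightarrow> 'e set \<Rightarrow> ('e \<Rightarrow> 'v set) \<Rightarrow> 'e set \<Rightarrow> bool" where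
  "is_cut V E ends C \<longleftrightarrow> (\<exists>U. U \<noteq> {} \<and> U \<subset> V \<and> C = cut_of E ends U)"

definition gen_attack :: "'v set \<Rightarrow> 'e set \<Rightarrow> ('e \<Rightarrow> 'v set) \<Rightarrow> 'e set \<Rightarrow>
    'e set \<Rightarrow> 'e set \<Rightarrow> 'e set \<Rightarrow> bool" where
  "gen_attack V E ends S C J I \<longleftrightarrow> is_cut V E ends C \<and> J \<subseteq> C \<and>
     I \<subseteq> (C \<inter> (E - S)) - J \<and> I \<noteq> {}"

definition hidden_attack where
  "hidden_attack V E ends S C J I \<longleftrightarrow> gen_attack V E ends S C J I \<and> I \<union> J = C"

definition detectable_attack where
  "detectable_attack V E ends S C J I \<longleftrightarrow> gen_attack V E ends S C J I \<and> 2 * card I > card (C - J)"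

definition admits_hidden_attack where
  "admits_hidden_attack V E ends S \<longleftrightarrow> (\<exists>C J I. hidden_attack V E ends S C J I)"

definition admits_detectable_attack where
  "admits_detectable_attack V E ends S \<longleftrightarrow> (\<exists>C J I. detectable_attack V E ends S C J I)"

end

theory Submission
  imports Defs
begin

lemma part1:
  assumes mg: "multigraph V E ends" and e: "e \<in> E - S"
  shows "hidden_attack V E ends S (cut_of E ends {SOME a. a \<in> ends e}) (cut_of E ends {SOME a. a \<in> ends e} - {e}) {e}
       \<and> detectable_attack V E ends S (cut_of E ends {SOME a. a \<in> ends e}) (cut_of E ends {SOME a. a \<in> ends e} - {e}) {e}"
proof -
  define a where "a = (SOME a. a \<in> ends e)"
  have c2: "card (ends e) = 2" and sub: "ends e \<subseteq> V" using mg e unfolding multigraph_def by auto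
  then obtain x y where xy: "ends e = {x, y}" "x \<noteq> y" by (meson card_2_iff)
  have a: "a \<in> ends e" unfolding a_def using xy by (metis insertI1 someI_ex)
  then obtain b where b: "b \<in> ends e" "b \<noteq> a" using xy by blast
  have U: "{a} \<noteq> {} \<and> {a} \<subset> V" using a b sub by blast
  have "ends e \<inter> {a} = {a}" using a by blast
  hence ec: "e \<in> cut_of E ends {a}" using e unfolding cut_of_def by auto
  have cut: "is_cut V E ends (cut_of E ends {a})" unfolding is_cut_def using U by blast
  have g: "gen_attack V E ends S (cut_of E ends {a}) (cut_of E ends {a} - {e}) {e}"
    unfolding gen_attack_def using cut ec e by blast
  have d: "cut_of E ends {a} - (cut_of E ends {a} - {e}) = {e}" using ec by blast
  show ?thesis unfolding a_def[symmetric] hidden_attack_def detectable_attack_def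
    using g ec d by auto
qed

lemma part2:
  assumes mg: "multigraph V E' ends'" and EE: "E \<subseteq> E'" and en: "\<forall>e\<in>E. ends' e = ends e"
    and g: "gen_attack V E ends S C J I" and SE: "S \<subseteq> E"
  defines "C' \<equiv> (\<lambda>U. cut_of E' ends' U)"
  shows "\<exists>U. gen_attack V E' ends' (S \<union> (E' - E)) (C' U) (J \<union> (C' U - C)) I
          \<and> I \<union> (J \<union> (C' U - C)) = (I \<union> J) \<union> (C' U - C)
          \<and> C' U - (J \<union> (C' U - C)) = C - J \<and> C \<subseteq> C' U"
proof -
  from g obtain U where U: "U \<noteq> {}" "U \<subset> V" "C = cut_of E ends U" and J: "J \<subseteq> C"
    and I: "I \<subseteq> (C \<inter> (E - S)) - J" "I \<noteq> {}"
    unfolding gen_attack_def is_cut_def by blast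
  have CC: "C' U \<inter> E = C" using U(3) en EE unfolding C'_def cut_of_def by auto
  have cut: "is_cut V E' ends' (C' U)" unfolding is_cut_def C'_def using U by blast
  have "gen_attack V E' ends' (S \<union> (E' - E)) (C' U) (J \<union> (C' U - C)) I"
    unfolding gen_attack_def using cut J I CC EE by blast
  moreover have "I \<union> (J \<union> (C' U - C)) = (I \<union> J) \<union> (C' U - C)" using I J CC by blast
  moreover have "C' U - (J \<union> (C' U - C)) = C - J" using CC J by blast
  moreover have "C \<subseteq> C' U" using CC by blast
  ultimately show ?thesis by blast
qed

theorem theorem8:
  fixes V :: "'v set" and E S :: "'e set" and ends :: "'e \<Rightarrow> 'v set"
  assumes "multigraph V E ends" and "S \<subseteq> E"
  shows "(E - S \<noteq> {} \<longrightarrow>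
            admits_hidden_attack V E ends S \<and> admits_detectable_attack V E ends S)
       \<and> (\<forall>E' ends'. multigraph V E' ends' \<and> E \<subseteq> E' \<and> (\<forall>e\<in>E. ends' e = ends e) \<longrightarrow>
            (admits_hidden_attack V E ends S \<longrightarrow> admits_hidden_attack V E' ends' (S \<union> (E' - E)))
          \<and> (admits_detectable_attack V E ends S \<longrightarrow> admits_detectable_attack V E' ends' (S \<union> (E' - E))))"
proof (intro conjI impI allI)
  assume "E - S \<noteq> {}"
  then obtain e where e: "e \<in> E - S" by blast
  from part1[OF assms(1) e] show "admits_hidden_attack V E ends S" "admits_detectable_attack V E ends S"
    unfolding admits_hidden_attack_def admits_detectable_attack_def by blast+
next
  fix E' ends'
  assume h: "multigraph V E' ends' \<and> E \<subseteq> E' \<and> (\<forall>e\<in>E. ends' e = ends e)"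
  {
    assume "admits_hidden_attack V E ends S"
    then obtain C J I where a: "gen_attack V E ends S C J I" "I \<union> J = C"
      unfolding admits_hidden_attack_def hidden_attack_def by blast
    from part2[of V E' ends' E ends S C J I] h a(1) assms(2) obtain U where
      u: "gen_attack V E' ends' (S \<union> (E' - E)) (cut_of E' ends' U) (J \<union> (cut_of E' ends' U - C)) I"
         "I \<union> (J \<union> (cut_of E' ends' U - C)) = (I \<union> J) \<union> (cut_of E' ends' U - C)" "C \<subseteq> cut_of E' ends' U"
      by blast
    have "I \<union> (J \<union> (cut_of E' ends' U - C)) = cut_of E' ends' U" using u(2,3) a(2) by blast
    with u(1) show "admits_hidden_attack V E' ends' (S \<union> (E' - E))"
      unfolding admits_hidden_attack_def hidden_attack_def by blast
  }
  {
    assume "admits_detectable_attack V E ends S"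
    then obtain C J I where a: "gen_attack V E ends S C J I" "2 * card I > card (C - J)"
      unfolding admits_detectable_attack_def detectable_attack_def by blast
    from part2[of V E' ends' E ends S C J I] h a(1) assms(2) obtain U where
      u: "gen_attack V E' ends' (S \<union> (E' - E)) (cut_of E' ends' U) (J \<union> (cut_of E' ends' U - C)) I"
         "cut_of E' ends' U - (J \<union> (cut_of E' ends' U - C)) = C - J"
      by blast
    with a(2) show "admits_detectable_attack V E' ends' (S \<union> (E' - E))"
      unfolding admits_detectable_attack_def detectable_attack_def by metis
  }
qed

end
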